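(* Let $(\mathcal{K},[\cdot,\cdot])$ be a Krein space with canonical decomposition $\mathcal{K}=\mathcal{K}^+\oplus\mathcal{K}^-$, and let $\{f_n\}_{n\in I}$, $I=I_+\sqcup I_-$, be a Riesz basis for $(\mathcal{K},[\cdot,\cdot])$ with $f_n=U^+e_n$ for $n\in I_+$ and $f_n=U^-e_n$ for $n\in I_-$, where $\{e_n\}_{n\in I_+}$ is an orthonormal basis of $\mathcal{K}^+$, $\{e_n\}_{n\in I_-}$ is an orthonormal basis of $\mathcal{K}^-$, and $U^+:\mathcal{K}^+\to\mathcal{K}^+$, $U^-:\mathcal{K}^-\to\mathcal{K}^-$ are bounded bijective linear operators. Then there exist positive constants $A,B,A',B'$ such that \[A\|f\|^2\le\sum_{n\in I_+}|[f,f_n]|^2\le B\|f\|^2\quad\text{for all } f\in\mathcal{K}^+\] and \[A'\|f\|^2\le\sum_{n\in I_-}|[f,f_n]|^2\le B'\|f\|^2\quad\text{for all } f\in\mathcal{K}^-.\] Moreover, the largest possible values of $A$ and $A'$ are $\frac{1}{\|(U^+)^{-1}\|^2}$ and $\frac{1}{\|(U^-)^{-1}\|^2}$ respectively, and the smallest possible values of $B$ and $B'$ are $\|U^+\|^2$ and $\|U^-\|^2$ respectively.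
   Context: A Krein space $(\mathcal{K},[\cdot,\cdot])$ is a vector space with a Hermitian sesquilinear (indefinite) form $[\cdot,\cdot]$ admitting a $[\cdot,\cdot]$-orthogonal direct sum decomposition $\mathcal{K}=\mathcal{K}^+\oplus\mathcal{K}^-$ such that $(\mathcal{K}^+,[\cdot,\cdot])$ and $(\mathcal{K}^-,-[\cdot,\cdot])$ are Hilbert spaces. The norm on $\mathcal{K}^+$ is $\|x\|=[x,x]^{1/2}$ and on $\mathcal{K}^-$ is $\|x\|=(-[x,x])^{1/2}$. Orthonormal bases, adjoints and operator norms on $\mathcal{K}^\pm$ are taken with respect to these Hilbert space structures. *)

theory Defs
  imports "HOL-Analysis.Analysis"
begin

(* A complex vector space is represented by a type 'a :: ab_group_add together with
   a scalar multiplication  sc :: complex => 'a => 'a  satisfying  vector_space sc. *)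

definition fnorm :: "('a \<Rightarrow> 'a \<Rightarrow> complex) \<Rightarrow> 'a \<Rightarrow> real" where
  "fnorm G x = sqrt (Re (G x x))"

definition hilbert_part :: "('a::ab_group_add \<Rightarrow> 'a \<Rightarrow> complex) \<Rightarrow> 'a set \<Rightarrow> bool" where
  "hilbert_part G S \<longleftrightarrow>
     (\<forall>x\<in>S. x \<noteq> 0 \<longrightarrow> Re (G x x) > 0) \<and>
     (\<forall>X. (\<forall>n. X n \<in> S) \<and>
          (\<forall>e>0. \<exists>N. \<forall>m\<ge>N. \<forall>n\<ge>N. fnorm G (X m - X n) < e)
        \<longrightarrow> (\<exists>x\<in>S. (\<lambda>n. fnorm G (X n - x)) \<longlonglongrightarrow> 0))"

definition krein_space ::
  "(complex \<Rightarrow> 'a::ab_group_add \<Rightarrow> 'a) \<Rightarrow> ('a \<Rightarrow> 'a \<Rightarrow> complex) \<Rightarrow> 'a set \<Rightarrow> 'a set \<Rightarrow> bool" where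
  "krein_space sc B Kp Km \<longleftrightarrow>
     vector_space sc \<and>
     (\<forall>x y z. B (x + y) z = B x z + B y z) \<and>
     (\<forall>c x y. B (sc c x) y = c * B x y) \<and>
     (\<forall>x y. B y x = cnj (B x y)) \<and>
     module.subspace sc Kp \<and> module.subspace sc Km \<and>
     Kp \<inter> Km = {0} \<and> (\<forall>x. \<exists>p\<in>Kp. \<exists>m\<in>Km. x = p + m) \<and>
     (\<forall>p\<in>Kp. \<forall>m\<in>Km. B p m = 0) \<and>
     hilbert_part B Kp \<and> hilbert_part (\<lambda>x y. - B x y) Km"

definition onb :: "('a::ab_group_add \<Rightarrow> 'a \<Rightarrow> complex) \<Rightarrow> 'a set \<Rightarrow> 'i set \<Rightarrow> ('i \<Rightarrow> 'a) \<Rightarrow> bool" where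
  "onb G S I e \<longleftrightarrow>
     (\<forall>n\<in>I. e n \<in> S) \<and>
     (\<forall>n\<in>I. \<forall>m\<in>I. G (e n) (e m) = (if n = m then 1 else 0)) \<and>
     (\<forall>x\<in>S. (\<forall>n\<in>I. G x (e n) = 0) \<longrightarrow> x = 0)"

definition bounded_bij_op ::
  "(complex \<Rightarrow> 'a::ab_group_add \<Rightarrow> 'a) \<Rightarrow> ('a \<Rightarrow> 'a \<Rightarrow> complex) \<Rightarrow> 'a set \<Rightarrow> ('a \<Rightarrow> 'a) \<Rightarrow> bool" where
  "bounded_bij_op sc G S U \<longleftrightarrow>
     bij_betw U S S \<and>
     (\<forall>x\<in>S. \<forall>y\<in>S. U (x + y) = U x + U y) \<and>
     (\<forall>c. \<forall>x\<in>S. U (sc c x) = sc c (U x)) \<and>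
     (\<exists>C. \<forall>x\<in>S. fnorm G (U x) \<le> C * fnorm G x)"

definition opnorm :: "('a \<Rightarrow> 'a \<Rightarrow> complex) \<Rightarrow> 'a set \<Rightarrow> ('a \<Rightarrow> 'a) \<Rightarrow> real" where
  "opnorm G S U = Sup {fnorm G (U x) | x. x \<in> S \<and> fnorm G x \<le> 1}"

definition coef_summable :: "('a \<Rightarrow> 'a \<Rightarrow> complex) \<Rightarrow> ('i \<Rightarrow> 'a) \<Rightarrow> 'i set \<Rightarrow> 'a \<Rightarrow> bool" where
  "coef_summable B fb I f \<longleftrightarrow> (\<lambda>n. (cmod (B f (fb n)))\<^sup>2) summable_on I"

definition coef_sum :: "('a \<Rightarrow> 'a \<Rightarrow> complex) \<Rightarrow> ('i \<Rightarrow> 'a) \<Rightarrow> 'i set \<Rightarrow> 'a \<Rightarrow> real" where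
  "coef_sum B fb I f = infsum (\<lambda>n. (cmod (B f (fb n)))\<^sup>2) I"

end

theory Submission
  imports Defs
begin

locale hs =
  fixes sc :: "complex \<Rightarrow> 'a::ab_group_add \<Rightarrow> 'a" and G :: "'a \<Rightarrow> 'a \<Rightarrow> complex" and S :: "'a set"
  assumes md: "module sc"
    and addL: "\<And>x y z. G (x + y) z = G x z + G y z"
    and scL: "\<And>c x y. G (sc c x) y = c * G x y"
    and herm: "\<And>x y. G y x = cnj (G x y)"
    and sub: "module.subspace sc S"
    and hp: "hilbert_part G S"
begin

sublocale module sc by (rule md)

lemma S0: "0 \<in> S" using sub subspace_0 by blast
lemma Sadd: "x \<in> S \<Longrightarrow> y \<in> S \<Longrightarrow> x + y \<in> S" using sub subspace_add by blast
lemma Sdiff: "x \<in> S \<Longrightarrow> y \<in> S \<Longrightarrow> x - y \<in> S" using sub subspace_diff by blast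
lemma Sneg: "x \<in> S \<Longrightarrow> - x \<in> S" using sub subspace_neg by blast
lemma Ssc: "x \<in> S \<Longrightarrow> sc c x \<in> S" using sub subspace_scale by blast
lemma Ssum: "(\<And>i. i \<in> F \<Longrightarrow> f i \<in> S) \<Longrightarrow> sum f F \<in> S" using sub subspace_sum by blast

lemma G0L[simp]: "G 0 y = 0" using addL[of 0 0 y] by simp
lemma GnegL: "G (-x) y = - G x y"
proof -
  have "G (x + -x) y = G x y + G (-x) y" by (rule addL)
  then show ?thesis by (simp add: add_eq_0_iff)
qed
lemma GdiffL: "G (x - y) z = G x z - G y z" using addL[of x "-y" z] GnegL by simp
lemma addR: "G x (y + z) = G x y + G x z"
  by (metis addL complex_cnj_add herm)
lemma G0R[simp]: "G x 0 = 0" by (metis G0L complex_cnj_zero herm)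
lemma GnegR: "G x (-y) = - G x y" by (metis GnegL complex_cnj_minus herm)
lemma GdiffR: "G x (y - z) = G x y - G x z" by (metis GdiffL complex_cnj_diff herm)
lemma scR: "G x (sc c y) = cnj c * G x y" by (metis scL complex_cnj_mult herm)
lemma GsumL: "G (sum f F) y = (\<Sum>i\<in>F. G (f i) y)"
  by (induction F rule: infinite_finite_induct) (auto simp: addL)
lemma GsumR: "G y (sum f F) = (\<Sum>i\<in>F. G y (f i))"
  by (induction F rule: infinite_finite_induct) (auto simp: addR)
lemma Gself_real: "G x x = complex_of_real (Re (G x x))"
  using herm[of x x] by (simp add: complex_eq_iff)

lemma cn2: "(complex_of_real (cmod z))^2 = z * cnj z"
  using complex_norm_square[of z] by simp
lemma cn2': "(complex_of_real (cmod z))^2 = cnj z * z"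
  using cn2 by (simp add: mult.commute)

definition nrm where "nrm x = fnorm G x"

lemma Re_nonneg: "x \<in> S \<Longrightarrow> 0 \<le> Re (G x x)"
  using hp unfolding hilbert_part_def by (cases "x = 0") (auto intro: less_imp_le)

lemma nrm_sq: "x \<in> S \<Longrightarrow> (nrm x)^2 = Re (G x x)"
  using Re_nonneg by (simp add: nrm_def fnorm_def)
lemma nrm_nonneg: "x \<in> S \<Longrightarrow> 0 \<le> nrm x"
  using Re_nonneg by (simp add: nrm_def fnorm_def)
lemma nrm_zero: "x \<in> S \<Longrightarrow> nrm x = 0 \<longleftrightarrow> x = 0"
  using hp unfolding hilbert_part_def nrm_def fnorm_def by force
lemma nrm0[simp]: "nrm 0 = 0" by (simp add: nrm_def fnorm_def)
lemma Gself: "x \<in> S \<Longrightarrow> G x x = complex_of_real ((nrm x)^2)"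
  using Gself_real nrm_sq by metis
lemma nrm_neg: "nrm (-x) = nrm x"
  by (simp add: nrm_def fnorm_def GnegL GnegR)
lemma nrm_commute: "nrm (x - y) = nrm (y - x)"
  by (metis minus_diff_eq nrm_neg)
lemma nrm_scale: "nrm (sc c x) = cmod c * nrm x"
proof -
  have "G (sc c x) (sc c x) = complex_of_real ((cmod c)^2) * G x x"
    by (simp add: scL scR cn2' mult.assoc)
  then have "Re (G (sc c x) (sc c x)) = (cmod c)^2 * Re (G x x)"
    by (simp add: mult.commute)
  then show ?thesis by (simp add: nrm_def fnorm_def real_sqrt_mult)
qed

lemma CS: assumes "x \<in> S" "y \<in> S" shows "cmod (G x y) \<le> nrm x * nrm y"
proof (cases "y = 0")
  case True then show ?thesis using assms nrm_nonneg by simp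
next
  case False
  define g where "g = Re (G y y)"
  have gpos: "g > 0" using hp False assms unfolding hilbert_part_def g_def by blast
  have Gyy: "G y y = complex_of_real g" using Gself_real g_def by metis
  define a where "a = G x y"
  define t where "t = a / complex_of_real g"
  have zS: "x - sc t y \<in> S" using assms Ssc Sdiff by blast
  have "G (x - sc t y) (x - sc t y) = G x x - cnj t * a - t * cnj a + t * cnj t * complex_of_real g"
    by (simp add: GdiffL GdiffR scL scR Gyy a_def algebra_simps flip: herm)
  also have "\<dots> = G x x - complex_of_real ((cmod a)^2 / g)"
  proof -
    have gnz: "complex_of_real g \<noteq> 0" using gpos by simp
    have e1: "cnj t * a = complex_of_real ((cmod a)^2 / g)"
      using gnz by (simp add: t_def cn2 field_simps)
    have e2: "t * cnj a = complex_of_real ((cmod a)^2 / g)"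
      using gnz by (simp add: t_def cn2 field_simps)
    have e3: "t * cnj t * complex_of_real g = complex_of_real ((cmod a)^2 / g)"
      using gnz by (simp add: t_def cn2 field_simps power2_eq_square flip: of_real_mult)
         (metis cn2 power2_eq_square of_real_mult)
    show ?thesis by (simp add: e1 e2 e3)
  qed
  finally have "Re (G (x - sc t y) (x - sc t y)) = Re (G x x) - (cmod a)^2 / g" by simp
  with Re_nonneg[OF zS] have "(cmod a)^2 / g \<le> Re (G x x)" by linarith
  then have "(cmod a)^2 \<le> Re (G x x) * g" using gpos by (simp add: field_simps)
  also have "\<dots> = (nrm x * nrm y)^2" using assms by (simp add: nrm_sq g_def power_mult_distrib)
  finally show ?thesis unfolding a_def
    using assms nrm_nonneg by (meson mult_nonneg_nonneg power2_le_imp_le)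
qed

lemma tri: assumes "x \<in> S" "y \<in> S" shows "nrm (x + y) \<le> nrm x + nrm y"
proof -
  have "G (x+y) (x+y) = G x x + G x y + cnj (G x y) + G y y"
    by (simp add: addL addR flip: herm)
  then have "(nrm (x+y))^2 = (nrm x)^2 + 2 * Re (G x y) + (nrm y)^2"
    using assms Sadd by (simp add: nrm_sq)
  also have "\<dots> \<le> (nrm x)^2 + 2 * (nrm x * nrm y) + (nrm y)^2"
    using CS[OF assms] complex_Re_le_cmod[of "G x y"] by linarith
  also have "\<dots> = (nrm x + nrm y)^2" by (simp add: power2_sum)
  finally show ?thesis using assms nrm_nonneg by (meson add_nonneg_nonneg power2_le_imp_le)
qed

lemma tri_diff: assumes "x \<in> S" "y \<in> S" "z \<in> S" shows "nrm (x - z) \<le> nrm (x - y) + nrm (y - z)"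
  using tri[of "x - y" "y - z"] assms Sdiff by simp

end

context hs begin

lemma complete_seq:
  assumes "\<And>k. X k \<in> S" and "\<And>e. e > 0 \<Longrightarrow> \<exists>N. \<forall>m\<ge>N. \<forall>n\<ge>N. nrm (X m - X n) < e"
  shows "\<exists>x\<in>S. (\<lambda>k. nrm (X k - x)) \<longlonglongrightarrow> 0"
proof -
  have H: "\<And>X. (\<forall>n. X n \<in> S) \<and> (\<forall>e>0. \<exists>N. \<forall>m\<ge>N. \<forall>n\<ge>N. fnorm G (X m - X n) < e)
     \<Longrightarrow> (\<exists>x\<in>S. (\<lambda>n. fnorm G (X n - x)) \<longlonglongrightarrow> 0)"
    using hp unfolding hilbert_part_def by blast
  have "(\<forall>n. X n \<in> S) \<and> (\<forall>e>0. \<exists>N. \<forall>m\<ge>N. \<forall>n\<ge>N. fnorm G (X m - X n) < e)"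
    using assms unfolding nrm_def by blast
  from H[OF this] show ?thesis unfolding nrm_def .
qed

lemma nrm_tendsto_0_imp:
  assumes "(\<lambda>k. nrm (X k - x)) \<longlonglongrightarrow> 0" "\<And>k. cmod (f k - l) \<le> C * nrm (X k - x)"
  shows "f \<longlonglongrightarrow> l"
proof -
  have "(\<lambda>k. C * nrm (X k - x)) \<longlonglongrightarrow> 0" using tendsto_mult_right_zero[OF assms(1)] by simp
  then have "(\<lambda>k. f k - l) \<longlonglongrightarrow> 0"
    by (rule Lim_null_comparison[rotated]) (use assms(2) in auto)
  then show ?thesis by (rule LIM_zero_cancel)
qed

lemma contL:
  assumes "\<And>k. X k \<in> S" "x \<in> S" "z \<in> S" "(\<lambda>k. nrm (X k - x)) \<longlonglongrightarrow> 0"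
  shows "(\<lambda>k. G (X k) z) \<longlonglongrightarrow> G x z"
proof (rule nrm_tendsto_0_imp[OF assms(4), of _ _ "nrm z"])
  fix k show "cmod (G (X k) z - G x z) \<le> nrm z * nrm (X k - x)"
    using CS[of "X k - x" z] assms Sdiff by (simp add: GdiffL mult.commute)
qed

lemma contR:
  assumes "\<And>k. X k \<in> S" "x \<in> S" "z \<in> S" "(\<lambda>k. nrm (X k - x)) \<longlonglongrightarrow> 0"
  shows "(\<lambda>k. G z (X k)) \<longlonglongrightarrow> G z x"
proof -
  have "(\<lambda>k. cnj (G (X k) z)) \<longlonglongrightarrow> cnj (G x z)" using contL[OF assms] by (rule tendsto_cnj)
  then show ?thesis by (simp flip: herm)
qed

end

locale hsb = hs +
  fixes I :: "'i set" and e :: "'i \<Rightarrow> 'a"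
  assumes onb: "onb G S I e"
begin

lemma eS: "n \<in> I \<Longrightarrow> e n \<in> S" using conjunct1[OF onb[unfolded onb_def]] by simp
lemma eorth: "n \<in> I \<Longrightarrow> m \<in> I \<Longrightarrow> G (e n) (e m) = (if n = m then 1 else 0)"
  using conjunct1[OF conjunct2[OF onb[unfolded onb_def]]] by simp
lemma ecomp: "x \<in> S \<Longrightarrow> (\<And>n. n \<in> I \<Longrightarrow> G x (e n) = 0) \<Longrightarrow> x = 0"
  using conjunct2[OF conjunct2[OF onb[unfolded onb_def]]] by simp

definition comb :: "'i set \<Rightarrow> ('i \<Rightarrow> complex) \<Rightarrow> 'a" where
  "comb F d = (\<Sum>n\<in>F. sc (d n) (e n))"

lemma comb_S: "F \<subseteq> I \<Longrightarrow> comb F d \<in> S"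
  unfolding comb_def by (rule Ssum) (use eS Ssc in blast)

lemma comb_e: assumes "finite F" "F \<subseteq> I" "m \<in> I"
  shows "G (comb F d) (e m) = (if m \<in> F then d m else 0)"
proof -
  have "G (comb F d) (e m) = (\<Sum>n\<in>F. d n * (if n = m then 1 else 0))"
    unfolding comb_def GsumL scL
    by (rule sum.cong) (use assms eorth in auto)
  also have "\<dots> = (\<Sum>n\<in>F. if n = m then d n else 0)" by (rule sum.cong) auto
  also have "\<dots> = (if m \<in> F then d m else 0)" using assms(1) by (simp add: sum.delta')
  finally show ?thesis .
qed

lemma e_comb: assumes "finite F" "F \<subseteq> I" "m \<in> I"
  shows "G (e m) (comb F d) = (if m \<in> F then cnj (d m) else 0)"
  by (subst herm) (simp add: comb_e[OF assms])

lemma G_comb: "G y (comb F d) = (\<Sum>n\<in>F. cnj (d n) * G y (e n))"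
  unfolding comb_def GsumR scR ..

lemma comb_G: "G (comb F d) y = (\<Sum>n\<in>F. d n * G (e n) y)"
  unfolding comb_def GsumL scL ..

lemma comb_self: assumes "finite F" "F \<subseteq> I"
  shows "G (comb F d) (comb F d) = complex_of_real (\<Sum>n\<in>F. (cmod (d n))^2)"
proof -
  have "G (comb F d) (comb F d) = (\<Sum>n\<in>F. cnj (d n) * d n)"
    unfolding G_comb
  proof (rule sum.cong)
    fix n assume "n \<in> F" then show "cnj (d n) * G (comb F d) (e n) = cnj (d n) * d n"
      using comb_e[OF assms, of n d] assms by auto
  qed simp
  also have "\<dots> = (\<Sum>n\<in>F. complex_of_real ((cmod (d n))^2))"
    by (rule sum.cong) (auto simp: cn2')
  finally show ?thesis by simp
qed

lemma comb_nrm: assumes "finite F" "F \<subseteq> I"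
  shows "(nrm (comb F d))^2 = (\<Sum>n\<in>F. (cmod (d n))^2)"
  using comb_self[OF assms] nrm_sq[OF comb_S[OF assms(2)]] by simp

lemma comb_diff: assumes "finite F'" "F \<subseteq> F'"
  shows "comb F' d - comb F d = comb (F' - F) d"
  unfolding comb_def using assms by (simp add: sum_diff finite_subset)

end

context hsb begin
lemma bessel_fin: assumes "y \<in> S" "finite F" "F \<subseteq> I"
  shows "(\<Sum>n\<in>F. (cmod (G y (e n)))^2) \<le> (nrm y)^2"
proof -
  define d where "d n = G y (e n)" for n
  define v where "v = comb F d"
  define s where "s = (\<Sum>n\<in>F. (cmod (d n))^2)"
  have vS: "v \<in> S" unfolding v_def using comb_S assms by blast
  have vv: "G v v = complex_of_real s" unfolding v_def s_def using comb_self assms by blast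
  have vy: "G v y = complex_of_real s"
  proof -
    have "G v y = (\<Sum>n\<in>F. d n * cnj (d n))"
      unfolding v_def comb_G d_def by (rule sum.cong) (auto simp flip: herm)
    also have "\<dots> = (\<Sum>n\<in>F. complex_of_real ((cmod (d n))^2))"
      by (rule sum.cong) (auto simp: cn2)
    finally show ?thesis by (simp add: s_def)
  qed
  have yv: "G y v = complex_of_real s" using vy herm[of y v] by (metis complex_cnj_cnj complex_cnj_complex_of_real)
  have "G (y - v) (y - v) = G y y - complex_of_real s"
    by (simp add: GdiffL GdiffR vv vy yv)
  then have "0 \<le> Re (G y y) - s" using Re_nonneg[of "y - v"] Sdiff[OF assms(1) vS] by simp
  then show ?thesis using nrm_sq[OF assms(1)] by (simp add: s_def d_def)
qed

lemma bessel_summable: "y \<in> S \<Longrightarrow> (\<lambda>n. (cmod (G y (e n)))^2) summable_on I"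
  by (rule nonneg_bdd_above_summable_on) (auto intro!: bdd_aboveI[where M="(nrm y)^2"] bessel_fin)

lemma bessel: "y \<in> S \<Longrightarrow> infsum (\<lambda>n. (cmod (G y (e n)))^2) I \<le> (nrm y)^2"
  by (rule infsum_le_finite_sums) (auto intro: bessel_summable bessel_fin)

end

context hsb begin

lemma RF:
  assumes psum0: "(\<lambda>n. (cmod (d n))^2) summable_on I"
  shows "\<exists>F z. z \<in> S \<and> (\<forall>k. finite (F k) \<and> F k \<subseteq> I) \<and>
           (\<lambda>k. nrm (comb (F k) d - z)) \<longlonglongrightarrow> 0 \<and> (\<forall>n\<in>I. G z (e n) = d n)"
proof -
  define p where "p n = (cmod (d n))^2" for n
  have psum: "p summable_on I" using psum0 unfolding p_def .
  have tail: "\<exists>F0. finite F0 \<and> F0 \<subseteq> I \<and> (\<forall>H. finite H \<longrightarrow> H \<subseteq> I - F0 \<longrightarrow> sum p H \<le> \<epsilon>)"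
    if eps: "\<epsilon> > 0" for \<epsilon>
  proof -
    obtain F0 where F0: "finite F0" "F0 \<subseteq> I" "dist (sum p F0) (infsum p I) \<le> \<epsilon>"
      using infsum_finite_approximation[OF psum eps] by blast
    have "sum p H \<le> \<epsilon>" if H: "finite H" "H \<subseteq> I - F0" for H
    proof -
      have "sum p (F0 \<union> H) \<le> infsum p I"
        by (rule finite_sum_le_infsum[OF psum]) (use F0 H in \<open>auto simp: p_def\<close>)
      moreover have "sum p (F0 \<union> H) = sum p F0 + sum p H" using F0 H by (intro sum.union_disjoint) auto
      moreover have "infsum p I - sum p F0 \<le> \<epsilon>" using F0(3) by (simp add: dist_real_def abs_le_iff)
      ultimately show ?thesis by linarith
    qed
    then show ?thesis using F0 by blast
  qed
  have "\<forall>k. \<exists>F0. finite F0 \<and> F0 \<subseteq> I \<and> (\<forall>H. finite H \<longrightarrow> H \<subseteq> I - F0 \<longrightarrow> sum p H \<le> 1 / real (Suc k))"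
  proof
    fix k show "\<exists>F0. finite F0 \<and> F0 \<subseteq> I \<and> (\<forall>H. finite H \<longrightarrow> H \<subseteq> I - F0 \<longrightarrow> sum p H \<le> 1 / real (Suc k))"
      by (rule tail) simp
  qed
  from choice[OF this] obtain H0 where H0all: "\<forall>k. finite (H0 k) \<and> H0 k \<subseteq> I \<and>
     (\<forall>H. finite H \<longrightarrow> H \<subseteq> I - H0 k \<longrightarrow> sum p H \<le> 1 / real (Suc k))" ..
  have H0: "\<And>k. finite (H0 k)" "\<And>k. H0 k \<subseteq> I"
    "\<And>k H. finite H \<Longrightarrow> H \<subseteq> I - H0 k \<Longrightarrow> sum p H \<le> 1 / real (Suc k)"
    using H0all by auto
  define F where "F k = (\<Union>j\<le>k. H0 j)" for k
  have Ffin: "finite (F k)" for k unfolding F_def using H0(1) by simp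
  have FI: "F k \<subseteq> I" for k unfolding F_def using H0(2) by blast
  have Fmono: "k \<le> k' \<Longrightarrow> F k \<subseteq> F k'" for k k' unfolding F_def by (rule UN_mono) auto
  have H0F: "H0 k \<subseteq> F k" for k unfolding F_def by auto
  define s where "s k = comb (F k) d" for k
  have sS: "s k \<in> S" for k unfolding s_def using comb_S FI by blast
  have sdiff: "(nrm (s k' - s k))^2 \<le> 1 / real (Suc k)" if "k \<le> k'" for k k'
  proof -
    have "s k' - s k = comb (F k' - F k) d" unfolding s_def by (rule comb_diff[OF Ffin Fmono[OF that]])
    moreover have f1: "finite (F k' - F k)" using Ffin by simp
    moreover have f2: "F k' - F k \<subseteq> I" using FI by blast
    ultimately have "(nrm (s k' - s k))^2 = sum p (F k' - F k)"
      using comb_nrm[OF f1 f2, of d] unfolding p_def by simp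
    also have "\<dots> \<le> 1 / real (Suc k)"
    proof (rule H0(3))
      show "F k' - F k \<subseteq> I - H0 k" using FI[of k'] H0F[of k] by blast
    qed (simp add: Ffin)
    finally show ?thesis .
  qed
  have cauchy: "\<exists>N. \<forall>m\<ge>N. \<forall>n\<ge>N. nrm (s m - s n) < \<epsilon>" if "\<epsilon> > 0" for \<epsilon>
  proof -
    have "\<epsilon>^2 > 0" using that by simp
    then obtain N where N: "inverse (real (Suc N)) < \<epsilon>^2" using reals_Archimedean by blast
    have "nrm (s m - s n) < \<epsilon>" if "m \<ge> N" "n \<ge> N" for m n
    proof -
      have "(nrm (s m - s n))^2 \<le> 1 / real (Suc (min m n))"
        using sdiff[of n m] sdiff[of m n] nrm_commute[of "s m" "s n"] by (cases "n \<le> m") auto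
      also have "\<dots> \<le> 1 / real (Suc N)" using that by (simp add: frac_le)
      also have "\<dots> < \<epsilon>^2" using N by (simp add: inverse_eq_divide)
      finally show ?thesis using \<open>\<epsilon> > 0\<close> by (simp add: power2_less_imp_less)
    qed
    then show ?thesis by blast
  qed
  obtain z where zS: "z \<in> S" and zlim: "(\<lambda>k. nrm (s k - z)) \<longlonglongrightarrow> 0"
    using complete_seq[of s] sS cauchy by blast
  have coef: "G z (e n) = d n" if n: "n \<in> I" for n
  proof -
    have lim: "(\<lambda>k. G (s k) (e n)) \<longlonglongrightarrow> G z (e n)" by (rule contL[OF sS zS eS[OF n] zlim])
    show ?thesis
    proof (cases "\<exists>k0. n \<in> F k0")
      case True
      then obtain k0 where k0: "n \<in> F k0" by blast
      have ev: "G (s k) (e n) = d n" if "k \<ge> k0" for k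
      proof -
        have "n \<in> F k" using Fmono[OF that] k0 by blast
        then show ?thesis using comb_e[OF Ffin FI n, of k d] by (simp add: s_def)
      qed
      have "eventually (\<lambda>k. G (s k) (e n) = d n) sequentially"
        unfolding eventually_sequentially using ev by blast
      then have "(\<lambda>k. G (s k) (e n)) \<longlonglongrightarrow> d n" by (rule tendsto_eventually)
      then show ?thesis using lim LIMSEQ_unique by blast
    next
      case False
      have "G (s k) (e n) = 0" for k using False comb_e[OF Ffin FI n, of k d] by (simp add: s_def)
      then have "(\<lambda>k. 0) \<longlonglongrightarrow> G z (e n)" using lim by simp
      then have "G z (e n) = 0" using LIMSEQ_unique[OF tendsto_const] by metis
      moreover have "d n = 0"
      proof (rule ccontr)
        assume "d n \<noteq> 0"
        then have "p n > 0" by (simp add: p_def)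
        then obtain k where k: "inverse (real (Suc k)) < p n" using reals_Archimedean by blast
        have "n \<notin> H0 k" using False H0F[of k] by blast
        then have "sum p {n} \<le> 1 / real (Suc k)" using H0(3)[of "{n}" k] n by simp
        then show False using k by (simp add: inverse_eq_divide)
      qed
      ultimately show ?thesis by simp
    qed
  qed
  have zl: "(\<lambda>k. nrm (comb (F k) d - z)) \<longlonglongrightarrow> 0" using zlim unfolding s_def .
  show ?thesis using zS Ffin FI zl coef by blast
qed

lemma EXP:
  assumes yS: "y \<in> S"
  shows "\<exists>F. (\<forall>k. finite (F k) \<and> F k \<subseteq> I) \<and> (\<lambda>k. nrm (comb (F k) (\<lambda>n. G y (e n)) - y)) \<longlonglongrightarrow> 0"
proof -
  obtain F z where Fz: "z \<in> S" "\<forall>k. finite (F k) \<and> F k \<subseteq> I"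
    "(\<lambda>k. nrm (comb (F k) (\<lambda>n. G y (e n)) - z)) \<longlonglongrightarrow> 0" "\<forall>n\<in>I. G z (e n) = G y (e n)"
    using RF[OF bessel_summable[OF yS]] by blast
  have "z - y = 0"
  proof (rule ecomp)
    show "z - y \<in> S" using Fz(1) yS by (rule Sdiff)
    fix n assume "n \<in> I" then show "G (z - y) (e n) = 0" using Fz(4) by (simp add: GdiffL)
  qed
  then show ?thesis using Fz by auto
qed

end

context hs begin

definition bl :: "('a \<Rightarrow> 'a) \<Rightarrow> bool" where
  "bl T \<longleftrightarrow> (\<forall>x\<in>S. T x \<in> S) \<and> (\<forall>x\<in>S. \<forall>y\<in>S. T (x + y) = T x + T y) \<and>
     (\<forall>c. \<forall>x\<in>S. T (sc c x) = sc c (T x)) \<and> (\<exists>C. \<forall>x\<in>S. nrm (T x) \<le> C * nrm x)"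

context fixes T assumes blT: "bl T" begin

lemma blS: "x \<in> S \<Longrightarrow> T x \<in> S" using blT unfolding bl_def by blast
lemma bladd: "x \<in> S \<Longrightarrow> y \<in> S \<Longrightarrow> T (x + y) = T x + T y" using blT unfolding bl_def by blast
lemma blsc: "x \<in> S \<Longrightarrow> T (sc c x) = sc c (T x)" using blT unfolding bl_def by blast
lemma blbound: obtains C where "\<And>x. x \<in> S \<Longrightarrow> nrm (T x) \<le> C * nrm x"
proof -
  from blT obtain C where "\<forall>x\<in>S. nrm (T x) \<le> C * nrm x" unfolding bl_def by blast
  then show thesis using that by blast
qed
lemma bl0: "T 0 = 0" using bladd[OF S0 S0] by simp
lemma bldiff: assumes "x \<in> S" "y \<in> S" shows "T (x - y) = T x - T y"
proof -
  have "T ((x - y) + y) = T (x - y) + T y" using assms Sdiff bladd by blast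
  then show ?thesis by (simp add: algebra_simps)
qed
lemma blsum: "(\<And>i. i \<in> F \<Longrightarrow> f i \<in> S) \<Longrightarrow> T (sum f F) = (\<Sum>i\<in>F. T (f i))"
proof (induction F rule: infinite_finite_induct)
  case (infinite A) then show ?case by (simp add: bl0)
next
  case empty then show ?case by (simp add: bl0)
next
  case (insert x F)
  have "f x \<in> S" "sum f F \<in> S" using insert.prems by (auto intro: Ssum)
  then have "T (f x + sum f F) = T (f x) + T (sum f F)" by (rule bladd)
  then show ?case using insert by simp
qed

definition "AT = {nrm (T x) | x. x \<in> S \<and> nrm x \<le> 1}"

lemma op_eq: "opnorm G S T = Sup AT" unfolding opnorm_def AT_def nrm_def ..

lemma AT_ne: "0 \<in> AT" unfolding AT_def using S0 bl0 by force

lemma AT_bdd: "bdd_above AT"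
proof -
  obtain C where C: "\<And>x. x \<in> S \<Longrightarrow> nrm (T x) \<le> C * nrm x" using blbound by blast
  have "a \<le> max C 0" if aA: "a \<in> AT" for a
  proof -
    obtain x where x: "x \<in> S" "nrm x \<le> 1" "a = nrm (T x)" using aA unfolding AT_def by blast
    have "C * nrm x \<le> max C 0"
    proof (cases "C \<ge> 0")
      case True then show ?thesis using x nrm_nonneg[of x] mult_left_le[of "nrm x" C] by simp
    next
      case False then show ?thesis using x nrm_nonneg[of x] by (simp add: mult_nonpos_nonneg)
    qed
    then show ?thesis using C[OF x(1)] x(3) by linarith
  qed
  then show ?thesis by (rule bdd_aboveI)
qed

lemma op_nonneg: "0 \<le> opnorm G S T"
  unfolding op_eq using cSup_upper[OF AT_ne AT_bdd] .

lemma op_bound: assumes xS: "x \<in> S" shows "nrm (T x) \<le> opnorm G S T * nrm x"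
proof (cases "x = 0")
  case True then show ?thesis by (simp add: bl0)
next
  case False
  define r where "r = nrm x"
  have rpos: "r > 0" using False xS nrm_zero nrm_nonneg r_def by force
  define x' where "x' = sc (complex_of_real (1 / r)) x"
  have x'S: "x' \<in> S" unfolding x'_def using xS Ssc by blast
  have "nrm x' = 1" unfolding x'_def nrm_scale r_def[symmetric] using rpos by (simp add: norm_divide)
  then have "nrm (T x') \<in> AT" unfolding AT_def using x'S by force
  then have "nrm (T x') \<le> opnorm G S T" unfolding op_eq using cSup_upper AT_bdd by blast
  moreover have "nrm (T x') = nrm (T x) / r"
    unfolding x'_def blsc[OF xS] nrm_scale using rpos by (simp add: norm_divide)
  ultimately show ?thesis using rpos by (simp add: r_def field_simps)
qed

lemma op_least: assumes "K \<ge> 0" "\<And>x. x \<in> S \<Longrightarrow> nrm (T x) \<le> K * nrm x"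
  shows "opnorm G S T \<le> K"
  unfolding op_eq
proof (rule cSup_least)
  show "AT \<noteq> {}" using AT_ne by blast
  fix a assume "a \<in> AT"
  then obtain x where x: "x \<in> S" "nrm x \<le> 1" "a = nrm (T x)" unfolding AT_def by blast
  have "K * nrm x \<le> K" using assms(1) x(2) mult_left_le by blast
  then show "a \<le> K" using assms(2)[OF x(1)] x(3) by linarith
qed

lemma Tlim:
  assumes "\<And>k. X k \<in> S" "x \<in> S" "f \<in> S" "(\<lambda>k. nrm (X k - x)) \<longlonglongrightarrow> 0"
  shows "(\<lambda>k. G f (T (X k))) \<longlonglongrightarrow> G f (T x)"
proof (rule nrm_tendsto_0_imp[OF assms(4), of _ _ "nrm f * opnorm G S T"])
  fix k
  have "cmod (G f (T (X k)) - G f (T x)) = cmod (G f (T (X k - x)))"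
    using assms bldiff by (simp add: GdiffR)
  also have "\<dots> \<le> nrm f * nrm (T (X k - x))" using CS assms blS Sdiff by blast
  also have "\<dots> \<le> nrm f * (opnorm G S T * nrm (X k - x))"
    using op_bound[of "X k - x"] assms Sdiff nrm_nonneg[of f] by (simp add: mult_left_mono)
  finally show "cmod (G f (T (X k)) - G f (T x)) \<le> nrm f * opnorm G S T * nrm (X k - x)"
    by (simp add: mult.assoc)
qed

end
end

context hsb begin
context fixes T assumes blT: "bl T" begin

lemma T_comb: assumes "F \<subseteq> I" shows "T (comb F d) = (\<Sum>n\<in>F. sc (d n) (T (e n)))"
  unfolding comb_def using assms
  by (subst blsum[OF blT]) (auto intro!: sum.cong simp: blsc[OF blT] eS Ssc subsetD)

lemma G_T_comb: assumes "F \<subseteq> I" shows "G f (T (comb F d)) = (\<Sum>n\<in>F. cnj (d n) * G f (T (e n)))"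
  unfolding T_comb[OF assms] GsumR scR ..

lemma frame_fin:
  assumes fS: "f \<in> S" and F: "finite F" "F \<subseteq> I"
  shows "(\<Sum>n\<in>F. (cmod (G f (T (e n))))^2) \<le> (opnorm G S T)^2 * (nrm f)^2"
proof -
  define a where "a n = G f (T (e n))" for n
  define v where "v = comb F a"
  define s where "s = (\<Sum>n\<in>F. (cmod (a n))^2)"
  define K where "K = opnorm G S T"
  have vS: "v \<in> S" unfolding v_def using comb_S F by blast
  have s0: "s \<ge> 0" unfolding s_def by (simp add: sum_nonneg)
  have "G f (T v) = (\<Sum>n\<in>F. cnj (a n) * a n)" unfolding v_def G_T_comb[OF F(2)] a_def ..
  also have "\<dots> = complex_of_real s" unfolding s_def by (simp add: cn2')
  finally have Gv: "G f (T v) = complex_of_real s" .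
  have nv: "nrm v = sqrt s" using comb_nrm[OF F, of a] vS nrm_nonneg
    unfolding v_def s_def by (metis real_sqrt_unique)
  have "s = cmod (G f (T v))" using Gv s0 by simp
  also have "\<dots> \<le> nrm f * nrm (T v)" using CS fS blS[OF blT vS] by blast
  also have "\<dots> \<le> nrm f * (K * nrm v)"
    using op_bound[OF blT vS] nrm_nonneg[OF fS] unfolding K_def by (simp add: mult_left_mono)
  finally have ineq: "s \<le> nrm f * K * sqrt s" by (simp add: nv mult.assoc)
  have "s \<le> (K * nrm f)^2"
  proof (cases "s = 0")
    case True then show ?thesis by simp
  next
    case False
    then have sp: "sqrt s > 0" using s0 by simp
    have "sqrt s * sqrt s \<le> (nrm f * K) * sqrt s" using ineq s0 real_sqrt_mult_self[of s] by simp
    then have "sqrt s \<le> nrm f * K" using mult_right_le_imp_le sp by blast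
    then have "(sqrt s)^2 \<le> (nrm f * K)^2" using sp by (intro power_mono) auto
    then show ?thesis using s0 by (simp add: mult.commute)
  qed
  then show ?thesis unfolding s_def a_def K_def by (simp add: power_mult_distrib)
qed

lemma frame_summable: "f \<in> S \<Longrightarrow> (\<lambda>n. (cmod (G f (T (e n))))^2) summable_on I"
  by (rule nonneg_bdd_above_summable_on)
     (auto intro!: bdd_aboveI[where M="(opnorm G S T)^2 * (nrm f)^2"] frame_fin)

lemma frame_le: "f \<in> S \<Longrightarrow> infsum (\<lambda>n. (cmod (G f (T (e n))))^2) I \<le> (opnorm G S T)^2 * (nrm f)^2"
  by (rule infsum_le_finite_sums) (auto intro: frame_summable frame_fin)

lemma keyineq:
  assumes fS: "f \<in> S" and yS: "y \<in> S"
  shows "cmod (G f (T y)) \<le> nrm y * sqrt (infsum (\<lambda>n. (cmod (G f (T (e n))))^2) I)"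
proof -
  define a where "a n = G f (T (e n))" for n
  define c where "c n = G y (e n)" for n
  define \<Sigma> where "\<Sigma> = infsum (\<lambda>n. (cmod (a n))^2) I"
  obtain F where F: "\<And>k. finite (F k)" "\<And>k. F k \<subseteq> I"
    and lim: "(\<lambda>k. nrm (comb (F k) c - y)) \<longlonglongrightarrow> 0"
    using EXP[OF yS] unfolding c_def by blast
  have bnd: "cmod (G f (T (comb (F k) c))) \<le> nrm y * sqrt \<Sigma>" for k
  proof -
    define w where "w = comb (F k) a"
    define yk where "yk = comb (F k) c"
    have wS: "w \<in> S" and ykS: "yk \<in> S" unfolding w_def yk_def using comb_S F by auto
    have "G f (T yk) = (\<Sum>n\<in>F k. cnj (c n) * a n)" unfolding yk_def G_T_comb[OF F(2)] a_def ..
    also have "\<dots> = G w yk"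
      unfolding w_def comb_G
    proof (rule sum.cong)
      fix n assume n: "n \<in> F k"
      then show "cnj (c n) * a n = a n * G (e n) yk"
        unfolding yk_def using e_comb[OF F(1)[of k] F(2)[of k], of n c] F(2)[of k] by auto
    qed simp
    finally have eq: "G f (T yk) = G w yk" .
    have "(nrm w)^2 \<le> \<Sigma>" unfolding w_def comb_nrm[OF F(1) F(2)] \<Sigma>_def
      by (rule finite_sum_le_infsum) (use frame_summable[OF fS] F in \<open>auto simp: a_def\<close>)
    then have nw: "nrm w \<le> sqrt \<Sigma>" using wS nrm_nonneg real_le_rsqrt by blast
    have "(nrm yk)^2 \<le> (nrm y)^2" unfolding yk_def comb_nrm[OF F(1) F(2)] c_def
      by (rule bessel_fin[OF yS F(1) F(2)])
    then have ny: "nrm yk \<le> nrm y" using yS nrm_nonneg power2_le_imp_le by blast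
    have \<Sigma>0: "\<Sigma> \<ge> 0" unfolding \<Sigma>_def by (rule infsum_nonneg) simp
    have "cmod (G f (T yk)) \<le> nrm w * nrm yk" unfolding eq using CS wS ykS by blast
    also have "\<dots> \<le> sqrt \<Sigma> * nrm y" by (rule mult_mono) (use nw ny wS ykS nrm_nonneg \<Sigma>0 in auto)
    finally show ?thesis unfolding yk_def by (simp add: mult.commute)
  qed
  have "(\<lambda>k. G f (T (comb (F k) c))) \<longlonglongrightarrow> G f (T y)"
    by (rule Tlim[OF blT _ yS fS lim]) (use comb_S F in blast)
  then have "(\<lambda>k. cmod (G f (T (comb (F k) c)))) \<longlonglongrightarrow> cmod (G f (T y))" by (rule tendsto_norm)
  then have "cmod (G f (T y)) \<le> nrm y * sqrt \<Sigma>" by (rule LIMSEQ_le_const2) (use bnd in blast)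
  then show ?thesis unfolding \<Sigma>_def a_def .
qed

lemma adjoint:
  assumes uS: "u \<in> S"
  shows "\<exists>z\<in>S. \<forall>v\<in>S. G z v = G u (T v)"
proof -
  define d where "d n = G u (T (e n))" for n
  obtain F z where z: "z \<in> S" "\<forall>n\<in>I. G z (e n) = d n"
    using RF[of d] frame_summable[OF uS] unfolding d_def by blast
  have "G z v = G u (T v)" if vS: "v \<in> S" for v
  proof -
    define c where "c n = G v (e n)" for n
    obtain F where F: "\<And>k. finite (F k)" "\<And>k. F k \<subseteq> I"
      and lim: "(\<lambda>k. nrm (comb (F k) c - v)) \<longlonglongrightarrow> 0"
      using EXP[OF vS] unfolding c_def by blast
    have cS: "comb (F k) c \<in> S" for k using comb_S F by blast
    have eq: "G z (comb (F k) c) = G u (T (comb (F k) c))" for k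
    proof -
      have "G z (comb (F k) c) = (\<Sum>n\<in>F k. cnj (c n) * d n)"
        unfolding G_comb by (rule sum.cong) (use z F(2) in auto)
      also have "\<dots> = G u (T (comb (F k) c))" unfolding G_T_comb[OF F(2)] d_def ..
      finally show ?thesis .
    qed
    have l1: "(\<lambda>k. G z (comb (F k) c)) \<longlonglongrightarrow> G z v" by (rule contR[OF cS vS z(1) lim])
    have l2: "(\<lambda>k. G u (T (comb (F k) c))) \<longlonglongrightarrow> G u (T v)" by (rule Tlim[OF blT cS vS uS lim])
    show ?thesis using l1 l2 eq LIMSEQ_unique by simp
  qed
  then show ?thesis using z by blast
qed

end
end

context hs begin

lemma nrm_diff_le: "x \<in> S \<Longrightarrow> y \<in> S \<Longrightarrow> nrm (x - y) \<le> nrm x + nrm y"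
  using tri[of x "-y"] Sneg nrm_neg[of y] by simp

lemma nrm_sum: "(\<And>i. i \<in> A \<Longrightarrow> f i \<in> S) \<Longrightarrow> nrm (sum f A) \<le> (\<Sum>i\<in>A. nrm (f i))"
proof (induction A rule: infinite_finite_induct)
  case (insert x F)
  have "nrm (f x + sum f F) \<le> nrm (f x) + nrm (sum f F)"
    by (rule tri) (use insert.prems in \<open>auto intro: Ssum\<close>)
  then show ?case using insert by simp
qed auto

lemma open_step:
  assumes blU: "bl U" and bij: "bij_betw U S S"
  shows "\<exists>Mc\<ge>0. \<forall>y\<in>S. \<forall>\<epsilon>>0. \<exists>x\<in>S. nrm x \<le> Mc * nrm y \<and> nrm (y - U x) < \<epsilon>"
proof -
  define d where "d x y = \<bar>nrm (x - y)\<bar>" for x y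
  have dS: "x \<in> S \<Longrightarrow> y \<in> S \<Longrightarrow> d x y = nrm (x - y)" for x y
    unfolding d_def using nrm_nonneg Sdiff by simp
  interpret M: Metric_space S d
  proof
    show "0 \<le> d x y" for x y unfolding d_def by simp
    show "d x y = d y x" for x y unfolding d_def using nrm_commute by simp
    show "x \<in> S \<Longrightarrow> y \<in> S \<Longrightarrow> d x y = 0 \<longleftrightarrow> x = y" for x y
      using dS nrm_zero Sdiff by simp
    show "x \<in> S \<Longrightarrow> y \<in> S \<Longrightarrow> z \<in> S \<Longrightarrow> d x z \<le> d x y + d y z" for x y z
      using dS tri_diff by simp
  qed
  have mcomp: "M.mcomplete"
    unfolding M.mcomplete_def
  proof (intro allI impI)
    fix \<sigma> assume "M.MCauchy \<sigma>"
    then have s1: "\<And>k. \<sigma> k \<in> S" and s2: "\<And>e. e > 0 \<Longrightarrow> \<exists>N. \<forall>m\<ge>N. \<forall>n\<ge>N. nrm (\<sigma> m - \<sigma> n) < e"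
      unfolding M.MCauchy_def using dS by (auto, metis rangeI subsetD)
    obtain x where xS: "x \<in> S" and xl: "(\<lambda>k. nrm (\<sigma> k - x)) \<longlonglongrightarrow> 0"
      using complete_seq[OF s1 s2] by blast
    have "limitin M.mtopology \<sigma> x sequentially"
      unfolding M.limitin_metric
    proof (intro conjI allI impI)
      show "x \<in> S" by (rule xS)
      fix \<epsilon> :: real assume "\<epsilon> > 0"
      then have "eventually (\<lambda>k. nrm (\<sigma> k - x) < \<epsilon>) sequentially"
        using order_tendstoD(2)[OF xl] by blast
      then show "eventually (\<lambda>k. \<sigma> k \<in> S \<and> d (\<sigma> k) x < \<epsilon>) sequentially"
        by eventually_elim (use s1 xS dS in auto)
    qed
    then show "\<exists>x. limitin M.mtopology \<sigma> x sequentially" by blast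
  qed
  define B where "B k = U ` {x \<in> S. nrm x \<le> real k}" for k :: nat
  define C where "C k = M.mtopology closure_of (B k)" for k
  have BS: "B k \<subseteq> S" for k unfolding B_def using blS[OF blU] by blast
  have "\<exists>k. M.mtopology interior_of (C k) \<noteq> {}"
  proof (rule ccontr)
    assume "\<not> ?thesis"
    then have "M.mtopology interior_of \<Union>(range C) = {}"
      by (intro M.metric_Baire_category_alt mcomp) (auto simp: C_def)
    moreover have "\<Union>(range C) = S"
    proof
      show "\<Union>(range C) \<subseteq> S" unfolding C_def using closure_of_subset_topspace by fastforce
      show "S \<subseteq> \<Union>(range C)"
      proof
        fix y assume yS: "y \<in> S"
        then obtain x where x: "x \<in> S" "y = U x" using bij unfolding bij_betw_def by blast
        obtain k :: nat where "nrm x \<le> real k" using real_arch_simple by blast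
        then have "y \<in> B k" unfolding B_def using x by blast
        then have "y \<in> C k" unfolding C_def using closure_of_subset[of "B k" M.mtopology] BS by auto
        then show "y \<in> \<Union>(range C)" by blast
      qed
    qed
    moreover have "M.mtopology interior_of S = S" using interior_of_topspace[of M.mtopology] by simp
    ultimately show False using S0 by simp
  qed
  then obtain k y0 where y0: "y0 \<in> M.mtopology interior_of (C k)" by blast
  then obtain r where r: "r > 0" "M.mball y0 r \<subseteq> M.mtopology interior_of (C k)"
    using openin_interior_of M.openin_mtopology by metis
  have y0S: "y0 \<in> S" using y0 interior_of_subset[of M.mtopology "C k"] closure_of_subset_topspace
    unfolding C_def by fastforce
  have P1: "\<exists>x\<in>S. nrm x \<le> real k \<and> nrm (U x - y) < \<epsilon>"
    if yS: "y \<in> S" and yr: "nrm (y - y0) < r" and eps: "\<epsilon> > 0" for y \<epsilon>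
  proof -
    have "d y0 y < r" using dS[OF y0S yS] nrm_commute[of y0 y] yr by simp
    then have "y \<in> M.mball y0 r" using yS y0S by simp
    then have "y \<in> M.mtopology interior_of (C k)" using r(2) by (rule subsetD[rotated])
    then have "y \<in> C k" using interior_of_subset by (rule subsetD[rotated])
    then have "y \<in> {x \<in> S. \<forall>r>0. \<exists>y\<in>B k. y \<in> M.mball x r}" unfolding C_def M.metric_closure_of .
    then obtain b where b: "b \<in> B k" "b \<in> M.mball y \<epsilon>" using eps by blast
    then obtain x where x: "x \<in> S" "nrm x \<le> real k" "b = U x" unfolding B_def by blast
    have bS: "b \<in> S" using b(1) BS by blast
    have "d y b < \<epsilon>" using b(2) by simp
    then have "nrm (y - b) < \<epsilon>" using dS[OF yS bS] by simp
    then have "nrm (U x - y) < \<epsilon>" using x(3) nrm_commute[of y b] by simp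
    then show ?thesis using x by blast
  qed
  have P2: "\<exists>x\<in>S. nrm x \<le> 2 * real k \<and> nrm (U x - y) < \<epsilon>"
    if yS: "y \<in> S" and yr: "nrm y < r" and eps: "\<epsilon> > 0" for y \<epsilon>
  proof -
    obtain x1 where x1: "x1 \<in> S" "nrm x1 \<le> real k" "nrm (U x1 - (y0 + y)) < \<epsilon>/2"
      using P1[of "y0 + y" "\<epsilon>/2"] Sadd[OF y0S yS] yr eps by auto
    obtain x2 where x2: "x2 \<in> S" "nrm x2 \<le> real k" "nrm (U x2 - y0) < \<epsilon>/2"
      using P1[of y0 "\<epsilon>/2"] y0S r eps by auto
    have eq: "U (x1 - x2) - y = (U x1 - (y0 + y)) - (U x2 - y0)"
      using bldiff[OF blU x1(1) x2(1)] by (simp add: algebra_simps)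
    have m1: "U x1 - (y0 + y) \<in> S" using blS[OF blU x1(1)] Sadd[OF y0S yS] Sdiff by blast
    have m2: "U x2 - y0 \<in> S" using blS[OF blU x2(1)] y0S Sdiff by blast
    have "nrm (U (x1 - x2) - y) \<le> nrm (U x1 - (y0 + y)) + nrm (U x2 - y0)"
      unfolding eq by (rule nrm_diff_le[OF m1 m2])
    moreover have "nrm (x1 - x2) \<le> nrm x1 + nrm x2" using nrm_diff_le x1 x2 by blast
    ultimately show ?thesis using x1 x2 Sdiff[OF x1(1) x2(1)] by (intro bexI[of _ "x1 - x2"]) auto
  qed
  define Mc where "Mc = 4 * real k / r"
  have Mc0: "Mc \<ge> 0" unfolding Mc_def using r by simp
  have P3: "\<exists>x\<in>S. nrm x \<le> Mc * nrm y \<and> nrm (y - U x) < \<epsilon>"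
    if yS: "y \<in> S" and eps: "\<epsilon> > 0" for y \<epsilon>
  proof (cases "y = 0")
    case True then show ?thesis using S0 bl0[OF blU] eps by (intro bexI[of _ 0]) auto
  next
    case False
    define n where "n = nrm y"
    have npos: "n > 0" using False yS nrm_zero nrm_nonneg n_def by force
    define t where "t = r / (2 * n)"
    have tpos: "t > 0" unfolding t_def using r npos by simp
    define y' where "y' = sc (complex_of_real t) y"
    have y'S: "y' \<in> S" unfolding y'_def using yS Ssc by blast
    have "nrm y' = t * n" unfolding y'_def nrm_scale n_def using tpos by simp
    also have "\<dots> = r / 2" unfolding t_def using npos by simp
    finally have ny': "nrm y' = r / 2" .
    obtain x' where x': "x' \<in> S" "nrm x' \<le> 2 * real k" "nrm (U x' - y') < \<epsilon> * t"
      using P2[OF y'S _ , of "\<epsilon> * t"] ny' r eps tpos by auto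
    define x where "x = sc (complex_of_real (1 / t)) x'"
    have xS: "x \<in> S" unfolding x_def using x' Ssc by blast
    have "nrm x = nrm x' / t" unfolding x_def nrm_scale using tpos by (simp add: norm_divide)
    also have "\<dots> \<le> 2 * real k / t" using x'(2) tpos by (simp add: divide_right_mono)
    also have "\<dots> = Mc * nrm y" unfolding t_def Mc_def n_def[symmetric] using npos r by (simp add: field_simps)
    finally have nx: "nrm x \<le> Mc * nrm y" .
    have yy: "sc (complex_of_real (1 / t)) y' = y" unfolding y'_def using tpos by simp
    have "y - U x = sc (complex_of_real (1 / t)) (y' - U x')"
      unfolding x_def blsc[OF blU x'(1)] yy[symmetric] scale_right_diff_distrib ..
    then have "nrm (y - U x) = nrm (U x' - y') / t"
      using nrm_commute[of y' "U x'"] tpos by (simp add: nrm_scale norm_divide)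
    also have "\<dots> < \<epsilon>" using x'(3) tpos by (simp add: field_simps)
    finally show ?thesis using xS nx by blast
  qed
  show ?thesis using Mc0 P3 by blast
qed

end

lemma geo: "m \<le> m' \<Longrightarrow> (\<Sum>i\<in>{m..<m'}. (1/2::real)^i) = 2*(1/2)^m - 2*(1/2)^m'"
proof (induction m' rule: dec_induct)
  case base then show ?case by simp
next
  case (step n) then show ?case by (simp add: sum.atLeastLessThan_Suc)
qed

context hs begin

lemma bounded_inverse:
  assumes blU: "bl U" and bij: "bij_betw U S S"
  shows "\<exists>C. \<forall>y\<in>S. nrm (inv_into S U y) \<le> C * nrm y"
proof -
  obtain Mc where Mc0: "Mc \<ge> 0" and P: "\<And>y \<epsilon>. y \<in> S \<Longrightarrow> \<epsilon> > 0 \<Longrightarrow> \<exists>x\<in>S. nrm x \<le> Mc * nrm y \<and> nrm (y - U x) < \<epsilon>"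
    using open_step[OF blU bij] by blast
  define ch where "ch y \<epsilon> = (SOME x. x \<in> S \<and> nrm x \<le> Mc * nrm y \<and> nrm (y - U x) < \<epsilon>)" for y \<epsilon>
  have ch: "ch y \<epsilon> \<in> S \<and> nrm (ch y \<epsilon>) \<le> Mc * nrm y \<and> nrm (y - U (ch y \<epsilon>)) < \<epsilon>"
    if "y \<in> S" "\<epsilon> > 0" for y \<epsilon>
    unfolding ch_def by (rule someI_ex) (use P[OF that] in blast)
  have inj: "inj_on U S" using bij bij_betw_def by blast
  have main: "\<exists>x\<in>S. U x = y \<and> nrm x \<le> 2 * Mc * nrm y" if yS: "y \<in> S" for y
  proof (cases "y = 0")
    case True then show ?thesis using S0 bl0[OF blU] by (intro bexI[of _ 0]) auto
  next
    case False
    define \<eta> where "\<eta> = nrm y"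
    have \<eta>pos: "\<eta> > 0" using False yS nrm_zero nrm_nonneg \<eta>_def by force
    define ys where "ys = rec_nat y (\<lambda>n yn. yn - U (ch yn (\<eta> / 2^Suc n)))"
    have ys0: "ys 0 = y" by (simp add: ys_def)
    have ysSuc: "ys (Suc n) = ys n - U (ch (ys n) (\<eta> / 2^Suc n))" for n by (simp add: ys_def)
    define xs where "xs n = ch (ys n) (\<eta> / 2^Suc n)" for n
    have ysS: "ys n \<in> S \<and> nrm (ys n) \<le> \<eta> / 2^n" for n
    proof (induction n)
      case 0 then show ?case using ys0 yS \<eta>_def by simp
    next
      case (Suc n)
      have ep: "\<eta> / 2^Suc n > 0" using \<eta>pos by simp
      note c = ch[OF conjunct1[OF Suc] ep]
      have "ys (Suc n) \<in> S" unfolding ysSuc using c Suc blS[OF blU] Sdiff by blast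
      moreover have "nrm (ys (Suc n)) \<le> \<eta> / 2^Suc n" unfolding ysSuc using c by simp
      ultimately show ?case by blast
    qed
    have xsS: "xs n \<in> S" and xsb: "nrm (xs n) \<le> Mc * \<eta> * (1/2)^n" for n
    proof -
      have ep: "\<eta> / 2^Suc n > 0" using \<eta>pos by simp
      note c = ch[OF conjunct1[OF ysS[of n]] ep]
      show "xs n \<in> S" unfolding xs_def using c by blast
      have "nrm (xs n) \<le> Mc * nrm (ys n)" unfolding xs_def using c by blast
      also have "\<dots> \<le> Mc * (\<eta> / 2^n)" using conjunct2[OF ysS[of n]] Mc0 by (rule mult_left_mono)
      finally show "nrm (xs n) \<le> Mc * \<eta> * (1/2)^n" by (simp add: power_one_over)
    qed
    define ps where "ps m = (\<Sum>i<m. xs i)" for m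
    have psS: "ps m \<in> S" for m unfolding ps_def using xsS by (intro Ssum)
    have Ups: "U (ps m) = y - ys m" for m
    proof (induction m)
      case 0 then show ?case by (simp add: ps_def bl0[OF blU] ys0)
    next
      case (Suc m)
      have "U (ps (Suc m)) = U (ps m) + U (xs m)"
        unfolding ps_def using bladd[OF blU] psS xsS by (simp add: ps_def)
      also have "\<dots> = (y - ys m) + U (xs m)" using Suc.IH by simp
      also have "\<dots> = y - (ys m - U (xs m))" by (simp add: algebra_simps)
      also have "ys m - U (xs m) = ys (Suc m)" using ysSuc[of m] by (simp add: xs_def)
      finally show ?case .
    qed
    have psdiff: "nrm (ps m' - ps m) \<le> 2 * Mc * \<eta> * (1/2)^m" if "m \<le> m'" for m m'
    proof -
      have "ps m' = ps m + (\<Sum>i\<in>{m..<m'}. xs i)"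
        unfolding ps_def lessThan_atLeast0 using that by (simp add: sum.atLeastLessThan_concat)
      then have "ps m' - ps m = (\<Sum>i\<in>{m..<m'}. xs i)" by (simp add: algebra_simps)
      then have "nrm (ps m' - ps m) \<le> (\<Sum>i\<in>{m..<m'}. nrm (xs i))" using nrm_sum[of "{m..<m'}" xs] xsS by simp
      also have "\<dots> \<le> (\<Sum>i\<in>{m..<m'}. Mc * \<eta> * (1/2)^i)" by (rule sum_mono) (rule xsb)
      also have "\<dots> = Mc * \<eta> * (2*(1/2)^m - 2*(1/2)^m')" by (simp add: sum_distrib_left[symmetric] geo[OF that])
      also have "\<dots> \<le> Mc * \<eta> * (2*(1/2)^m)" using Mc0 \<eta>pos by (intro mult_left_mono) auto
      finally show ?thesis by simp
    qed
    have cauchy: "\<exists>N. \<forall>m\<ge>N. \<forall>n\<ge>N. nrm (ps m - ps n) < \<epsilon>" if eps: "\<epsilon> > 0" for \<epsilon>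
    proof -
      define K where "K = 2 * Mc * \<eta> + 1"
      have "0 \<le> 2 * Mc * \<eta>" using Mc0 \<eta>pos by simp
      then have Kpos: "K > 0" unfolding K_def by linarith
      obtain N where N: "(1/2::real)^N < \<epsilon> / K" using real_arch_pow_inv[of "\<epsilon> / K" "1/2"] eps Kpos by auto
      have "nrm (ps m - ps n) < \<epsilon>" if mn: "m \<ge> N" "n \<ge> N" for m n
      proof -
        have gen: "nrm (ps a - ps b) < \<epsilon>" if ab: "b \<le> a" "b \<ge> N" for a b
        proof -
          have "nrm (ps a - ps b) \<le> 2 * Mc * \<eta> * (1/2)^b" by (rule psdiff[OF ab(1)])
          also have "\<dots> \<le> K * (1/2)^b" unfolding K_def by (simp add: mult_right_mono)
          also have "\<dots> \<le> K * (1/2)^N" using ab(2) Kpos by (intro mult_left_mono power_decreasing) auto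
          also have "\<dots> < \<epsilon>" using N Kpos by (simp add: field_simps)
          finally show ?thesis .
        qed
        show ?thesis
        proof (cases "n \<le> m")
          case True then show ?thesis using gen mn by blast
        next
          case False then show ?thesis using gen[of m n] mn nrm_commute by simp
        qed
      qed
      then show ?thesis by blast
    qed
    obtain x where xS: "x \<in> S" and xl: "(\<lambda>m. nrm (ps m - x)) \<longlonglongrightarrow> 0"
      using complete_seq[OF psS cauchy] by blast
    have nx: "nrm x \<le> 2 * Mc * \<eta>"
    proof (rule LIMSEQ_le_const)
      show "(\<lambda>m. 2 * Mc * \<eta> + nrm (ps m - x)) \<longlonglongrightarrow> 2 * Mc * \<eta>"
        using tendsto_add[OF tendsto_const xl] by simp
      show "\<exists>N. \<forall>m\<ge>N. nrm x \<le> 2 * Mc * \<eta> + nrm (ps m - x)"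
      proof (intro exI allI impI)
        fix m
        have "nrm x \<le> nrm (ps m) + nrm (x - ps m)" using tri[OF psS[of m] Sdiff[OF xS psS[of m]]] by simp
        moreover have "nrm (ps m) \<le> 2 * Mc * \<eta>" using psdiff[of 0 m] by (simp add: ps_def)
        ultimately show "nrm x \<le> 2 * Mc * \<eta> + nrm (ps m - x)" using nrm_commute[of x "ps m"] by simp
      qed
    qed
    have Ux: "U x = y"
    proof -
      define opU where "opU = opnorm G S U"
      have bnd: "nrm (U x - y) \<le> opU * nrm (ps m - x) + \<eta> * (1/2)^m" for m
      proof -
        have xp: "x - ps m \<in> S" using Sdiff[OF xS psS] .
        have eq: "U x - y = U (x - ps m) - ys m"
          using bldiff[OF blU xS psS[of m]] Ups[of m] by (simp add: algebra_simps)
        have "nrm (U x - y) \<le> nrm (U (x - ps m)) + nrm (ys m)"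
          unfolding eq by (rule nrm_diff_le[OF blS[OF blU xp] conjunct1[OF ysS[of m]]])
        also have "nrm (U (x - ps m)) \<le> opU * nrm (ps m - x)"
          using op_bound[OF blU xp] nrm_commute[of x "ps m"] unfolding opU_def by simp
        also have "nrm (ys m) \<le> \<eta> * (1/2)^m" using conjunct2[OF ysS[of m]] by (simp add: power_one_over)
        finally show ?thesis by simp
      qed
      have l1: "(\<lambda>m. opU * nrm (ps m - x)) \<longlonglongrightarrow> 0"
        using tendsto_mult[OF tendsto_const[of opU] xl] by simp
      have l2: "(\<lambda>m. \<eta> * (1/2::real)^m) \<longlonglongrightarrow> 0"
        using tendsto_mult[OF tendsto_const[of \<eta>] LIMSEQ_power_zero[of "1/2::real"]] by simp
      have l3: "(\<lambda>m. opU * nrm (ps m - x) + \<eta> * (1/2::real)^m) \<longlonglongrightarrow> 0"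
        using tendsto_add[OF l1 l2] by simp
      have "\<exists>N. \<forall>m\<ge>N. nrm (U x - y) \<le> opU * nrm (ps m - x) + \<eta> * (1/2::real)^m" using bnd by blast
      then have "nrm (U x - y) \<le> 0" by (rule LIMSEQ_le_const[OF l3])
      moreover have "U x - y \<in> S" using blS[OF blU xS] yS Sdiff by blast
      ultimately have "U x - y = 0" using nrm_nonneg nrm_zero by force
      then show ?thesis by simp
    qed
    show ?thesis using xS Ux nx \<eta>_def by blast
  qed
  have "nrm (inv_into S U y) \<le> 2 * Mc * nrm y" if yS: "y \<in> S" for y
  proof -
    obtain x where x: "x \<in> S" "U x = y" "nrm x \<le> 2 * Mc * nrm y" using main[OF yS] by blast
    have "inv_into S U y = x" by (rule inv_into_f_eq[OF inj x(1) x(2)])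
    then show ?thesis using x(3) by simp
  qed
  then show ?thesis by blast
qed

end

context hsb begin

lemma nrm_cmod: "f \<in> S \<Longrightarrow> (nrm f)^2 = cmod (G f f)"
  using Gself[of f] nrm_nonneg[of f] by (simp add: norm_power)

lemma W_props:
  assumes blU: "bl U" and bij: "bij_betw U S S"
  shows "\<And>x. x \<in> S \<Longrightarrow> inv_into S U x \<in> S" "\<And>x. x \<in> S \<Longrightarrow> U (inv_into S U x) = x"
    "\<And>x. x \<in> S \<Longrightarrow> inv_into S U (U x) = x" "bl (inv_into S U)"
proof -
  have inj: "inj_on U S" using bij by (simp add: bij_betw_def)
  have img: "U ` S = S" using bij by (simp add: bij_betw_def)
  show WS: "\<And>x. x \<in> S \<Longrightarrow> inv_into S U x \<in> S" using img by (metis inv_into_into)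
  show UW: "\<And>x. x \<in> S \<Longrightarrow> U (inv_into S U x) = x" using img by (metis f_inv_into_f)
  show "\<And>x. x \<in> S \<Longrightarrow> inv_into S U (U x) = x" using inj by (rule inv_into_f_f)
  obtain C where C: "\<forall>y\<in>S. nrm (inv_into S U y) \<le> C * nrm y" using bounded_inverse[OF blU bij] by blast
  have add: "inv_into S U (x + y) = inv_into S U x + inv_into S U y" if "x \<in> S" "y \<in> S" for x y
  proof (rule inv_into_f_eq[OF inj])
    show "inv_into S U x + inv_into S U y \<in> S" using WS that Sadd by blast
    show "U (inv_into S U x + inv_into S U y) = x + y" using bladd[OF blU WS WS] UW that by simp
  qed
  have scl: "inv_into S U (sc c x) = sc c (inv_into S U x)" if "x \<in> S" for c x
  proof (rule inv_into_f_eq[OF inj])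
    show "sc c (inv_into S U x) \<in> S" using WS that Ssc by blast
    show "U (sc c (inv_into S U x)) = sc c x" using blsc[OF blU WS] UW that by simp
  qed
  show "bl (inv_into S U)" unfolding bl_def using WS add scl C by blast
qed

theorem frame_main:
  assumes blU: "bl U" and bij: "bij_betw U S S" and nontriv: "S \<noteq> {0}"
    and fb: "\<forall>n\<in>I. fb n = U (e n)"
  shows "(\<forall>f\<in>S. coef_summable G fb I f \<and>
            (1 / (opnorm G S (inv_into S U))^2) * (fnorm G f)^2 \<le> coef_sum G fb I f \<and>
            coef_sum G fb I f \<le> (opnorm G S U)^2 * (fnorm G f)^2)
   \<and> 1 / (opnorm G S (inv_into S U))^2 > 0 \<and> (opnorm G S U)^2 > 0
   \<and> (\<forall>A. A > 0 \<and> (\<forall>f\<in>S. coef_summable G fb I f \<and> A * (fnorm G f)^2 \<le> coef_sum G fb I f)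
          \<longrightarrow> A \<le> 1 / (opnorm G S (inv_into S U))^2)
   \<and> (\<forall>B1. B1 > 0 \<and> (\<forall>f\<in>S. coef_summable G fb I f \<and> coef_sum G fb I f \<le> B1 * (fnorm G f)^2)
          \<longrightarrow> (opnorm G S U)^2 \<le> B1)"
proof -
  define W where "W = inv_into S U"
  note Wp = W_props[OF blU bij, folded W_def]
  define \<Sigma> where "\<Sigma> f = infsum (\<lambda>n. (cmod (G f (U (e n))))^2) I" for f
  define opW where "opW = opnorm G S W"
  define opU where "opU = opnorm G S U"
  have csum: "coef_sum G fb I f = \<Sigma> f" for f
    unfolding coef_sum_def \<Sigma>_def by (rule infsum_cong) (use fb in simp)
  have csumm: "coef_summable G fb I f \<longleftrightarrow> (\<lambda>n. (cmod (G f (U (e n))))^2) summable_on I" for f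
    unfolding coef_summable_def by (rule summable_on_cong) (use fb in simp)
  have fn: "fnorm G f = nrm f" for f by (simp add: nrm_def)
  have \<Sigma>0: "\<Sigma> f \<ge> 0" for f unfolding \<Sigma>_def by (rule infsum_nonneg) simp
  obtain x0 where x0: "x0 \<in> S" "x0 \<noteq> 0" using nontriv S0 by blast
  have inj: "inj_on U S" using bij bij_betw_def by blast
  have opWpos: "opW > 0"
  proof -
    have "W x0 \<noteq> 0" using Wp(2)[OF x0(1)] x0(2) bl0[OF blU] by metis
    then have "nrm (W x0) > 0" using Wp(1)[OF x0(1)] nrm_zero nrm_nonneg by force
    moreover have "nrm (W x0) \<le> opW * nrm x0" unfolding opW_def by (rule op_bound[OF Wp(4) x0(1)])
    moreover have "nrm x0 \<ge> 0" using nrm_nonneg x0 by blast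
    ultimately show ?thesis using op_nonneg[OF Wp(4)] unfolding opW_def
      by (metis less_eq_real_def mult_eq_0_iff order_le_less_trans)
  qed
  have opUpos: "opU > 0"
  proof -
    have "U x0 \<noteq> 0" using inj x0 bl0[OF blU] S0 by (metis inj_on_def)
    then have "nrm (U x0) > 0" using blS[OF blU x0(1)] nrm_zero nrm_nonneg by force
    moreover have "nrm (U x0) \<le> opU * nrm x0" unfolding opU_def by (rule op_bound[OF blU x0(1)])
    ultimately show ?thesis using op_nonneg[OF blU] unfolding opU_def
      by (metis less_eq_real_def mult_eq_0_iff order_le_less_trans)
  qed
  have summ: "(\<lambda>n. (cmod (G f (U (e n))))^2) summable_on I" if "f \<in> S" for f
    by (rule frame_summable[OF blU that])
  have upper: "\<Sigma> f \<le> opU^2 * (nrm f)^2" if "f \<in> S" for f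
    unfolding \<Sigma>_def opU_def by (rule frame_le[OF blU that])
  have lower: "(1 / opW^2) * (nrm f)^2 \<le> \<Sigma> f" if fS: "f \<in> S" for f
  proof -
    have "(nrm f)^2 = cmod (G f f)" using nrm_cmod[OF fS] .
    also have "\<dots> = cmod (G f (U (W f)))" using Wp(2)[OF fS] by simp
    also have "\<dots> \<le> nrm (W f) * sqrt (\<Sigma> f)" unfolding \<Sigma>_def by (rule keyineq[OF blU fS Wp(1)[OF fS]])
    also have "\<dots> \<le> (opW * nrm f) * sqrt (\<Sigma> f)"
      by (rule mult_right_mono) (use op_bound[OF Wp(4) fS] opW_def \<Sigma>0 in auto)
    finally have ineq: "(nrm f)^2 \<le> opW * nrm f * sqrt (\<Sigma> f)" .
    have "nrm f \<le> opW * sqrt (\<Sigma> f)"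
    proof (cases "nrm f = 0")
      case True then show ?thesis using opWpos \<Sigma>0 by simp
    next
      case False
      then have np: "nrm f > 0" using nrm_nonneg[OF fS] by simp
      have "nrm f * nrm f \<le> (opW * sqrt (\<Sigma> f)) * nrm f" using ineq by (simp add: power2_eq_square mult_ac)
      then show ?thesis using np by simp
    qed
    then have "(nrm f)^2 \<le> (opW * sqrt (\<Sigma> f))^2" using nrm_nonneg[OF fS] by (intro power_mono) auto
    also have "\<dots> = opW^2 * \<Sigma> f" using \<Sigma>0 by (simp add: power_mult_distrib)
    finally show ?thesis using opWpos by (simp add: field_simps)
  qed
  have sharpU: "opU^2 \<le> B1" if B1: "B1 > 0" "\<forall>f\<in>S. coef_summable G fb I f \<and> coef_sum G fb I f \<le> B1 * (fnorm G f)^2" for B1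
  proof -
    have hyp: "\<Sigma> f \<le> B1 * (nrm f)^2" if "f \<in> S" for f using B1(2) that by (simp add: csum fn)
    have "nrm (U x) \<le> sqrt B1 * nrm x" if xS: "x \<in> S" for x
    proof -
      have UxS: "U x \<in> S" by (rule blS[OF blU xS])
      have "(nrm (U x))^2 = cmod (G (U x) (U x))" using nrm_cmod[OF UxS] .
      also have "\<dots> \<le> nrm x * sqrt (\<Sigma> (U x))" unfolding \<Sigma>_def by (rule keyineq[OF blU UxS xS])
      also have "\<dots> \<le> nrm x * (sqrt B1 * nrm (U x))"
      proof (rule mult_left_mono)
        have "sqrt (\<Sigma> (U x)) \<le> sqrt (B1 * (nrm (U x))^2)" using hyp[OF UxS] by simp
        also have "\<dots> = sqrt B1 * nrm (U x)" using nrm_nonneg[OF UxS] by (simp add: real_sqrt_mult)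
        finally show "sqrt (\<Sigma> (U x)) \<le> sqrt B1 * nrm (U x)" .
      qed (use nrm_nonneg[OF xS] in simp)
      finally have ineq: "nrm (U x) * nrm (U x) \<le> (sqrt B1 * nrm x) * nrm (U x)"
        by (simp add: power2_eq_square mult_ac)
      show ?thesis
      proof (cases "nrm (U x) = 0")
        case True then show ?thesis using nrm_nonneg[OF xS] B1(1) by simp
      next
        case False then have "nrm (U x) > 0" using nrm_nonneg[OF UxS] by simp
        then show ?thesis using ineq by simp
      qed
    qed
    then have "opU \<le> sqrt B1" unfolding opU_def using B1(1) by (intro op_least[OF blU]) auto
    then have "opU^2 \<le> (sqrt B1)^2" using opUpos by (intro power_mono) auto
    then show ?thesis using B1(1) by simp
  qed
  have sharpW: "A \<le> 1 / opW^2" if A: "A > 0" "\<forall>f\<in>S. coef_summable G fb I f \<and> A * (fnorm G f)^2 \<le> coef_sum G fb I f" for A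
  proof -
    have hyp: "A * (nrm f)^2 \<le> \<Sigma> f" if "f \<in> S" for f using A(2) that by (simp add: csum fn)
    have "nrm (W g) \<le> (1 / sqrt A) * nrm g" if gS: "g \<in> S" for g
    proof -
      define u where "u = W g"
      have uS: "u \<in> S" unfolding u_def using Wp(1)[OF gS] .
      obtain z where zS: "z \<in> S" and z: "\<And>v. v \<in> S \<Longrightarrow> G z v = G u (W v)"
        using adjoint[OF Wp(4) uS] by blast
      have "\<Sigma> z = infsum (\<lambda>n. (cmod (G u (e n)))^2) I"
        unfolding \<Sigma>_def
      proof (rule infsum_cong)
        fix n assume n: "n \<in> I"
        have "G z (U (e n)) = G u (W (U (e n)))" using z blS[OF blU eS[OF n]] by blast
        also have "\<dots> = G u (e n)" using Wp(3)[OF eS[OF n]] by simp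
        finally show "(cmod (G z (U (e n))))^2 = (cmod (G u (e n)))^2" by simp
      qed
      also have "\<dots> \<le> (nrm u)^2" by (rule bessel[OF uS])
      finally have h2: "A * (nrm z)^2 \<le> (nrm u)^2" using hyp[OF zS] by linarith
      have "(nrm u)^2 = cmod (G u u)" using nrm_cmod[OF uS] .
      also have "G u u = G z g" using z[OF gS] by (simp add: u_def)
      also have "cmod (G z g) \<le> nrm z * nrm g" by (rule CS[OF zS gS])
      finally have h1: "(nrm u)^2 \<le> nrm z * nrm g" .
      have a0: "nrm u \<ge> 0" and b0: "nrm z \<ge> 0" and c0: "nrm g \<ge> 0"
        using nrm_nonneg uS zS gS by auto
      have sA: "sqrt A > 0" using A(1) by simp
      have "sqrt (A * (nrm z)^2) \<le> sqrt ((nrm u)^2)" using h2 by (rule real_sqrt_le_mono)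
      then have h3: "sqrt A * nrm z \<le> nrm u" using a0 b0 by (simp add: real_sqrt_mult)
      have "sqrt A * (nrm u)^2 \<le> sqrt A * (nrm z * nrm g)" using h1 sA by simp
      also have "\<dots> = (sqrt A * nrm z) * nrm g" by simp
      also have "\<dots> \<le> nrm u * nrm g" using h3 c0 by (rule mult_right_mono)
      finally have h4: "(sqrt A * nrm u) * nrm u \<le> nrm g * nrm u" by (simp add: power2_eq_square mult_ac)
      have "sqrt A * nrm u \<le> nrm g"
      proof (cases "nrm u = 0")
        case True then show ?thesis using c0 by simp
      next
        case False then have "nrm u > 0" using a0 by simp
        then show ?thesis using h4 by simp
      qed
      then show ?thesis unfolding u_def using sA by (simp add: field_simps)
    qed
    then have "opW \<le> 1 / sqrt A" unfolding opW_def using A(1) by (intro op_least[OF Wp(4)]) auto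
    then have "opW^2 \<le> (1 / sqrt A)^2" using opWpos by (intro power_mono) auto
    then have "opW^2 \<le> 1 / A" using A(1) by (simp add: power_divide)
    then have "A * opW^2 \<le> 1" using A(1) by (simp add: field_simps)
    then show ?thesis using opWpos by (simp add: field_simps)
  qed
  show ?thesis
    unfolding W_def[symmetric] opW_def[symmetric] opU_def[symmetric]
    using summ upper lower sharpU sharpW opWpos opUpos
    by (auto simp: csum csumm fn)
qed

end

theorem theorem3p4:
  fixes sc :: "complex \<Rightarrow> 'a::ab_group_add \<Rightarrow> 'a"
    and B :: "'a \<Rightarrow> 'a \<Rightarrow> complex"
    and Kp Km :: "'a set"
    and Ip Im :: "'i set"
    and e fb :: "'i \<Rightarrow> 'a"
    and Up Um :: "'a \<Rightarrow> 'a"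
  assumes krein: "krein_space sc B Kp Km"
    and Kp_nontriv: "Kp \<noteq> {0}" and Km_nontriv: "Km \<noteq> {0}"
    and disj: "Ip \<inter> Im = {}"
    and onb_p: "onb B Kp Ip e"
    and onb_m: "onb (\<lambda>x y. - B x y) Km Im e"
    and Up: "bounded_bij_op sc B Kp Up"
    and Um: "bounded_bij_op sc (\<lambda>x y. - B x y) Km Um"
    and fb_p: "\<forall>n\<in>Ip. fb n = Up (e n)"
    and fb_m: "\<forall>n\<in>Im. fb n = Um (e n)"
  shows
    "(\<exists>A B1 A' B1'. A > 0 \<and> B1 > 0 \<and> A' > 0 \<and> B1' > 0 \<and>
        (\<forall>f\<in>Kp. coef_summable B fb Ip f \<and>
            A * (fnorm B f)\<^sup>2 \<le> coef_sum B fb Ip f \<and>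
            coef_sum B fb Ip f \<le> B1 * (fnorm B f)\<^sup>2) \<and>
        (\<forall>f\<in>Km. coef_summable B fb Im f \<and>
            A' * (fnorm (\<lambda>x y. - B x y) f)\<^sup>2 \<le> coef_sum B fb Im f \<and>
            coef_sum B fb Im f \<le> B1' * (fnorm (\<lambda>x y. - B x y) f)\<^sup>2))
     \<and>
     (let LBp = {A. A > 0 \<and> (\<forall>f\<in>Kp. coef_summable B fb Ip f \<and>
                    A * (fnorm B f)\<^sup>2 \<le> coef_sum B fb Ip f)};
          UBp = {B1. B1 > 0 \<and> (\<forall>f\<in>Kp. coef_summable B fb Ip f \<and>
                    coef_sum B fb Ip f \<le> B1 * (fnorm B f)\<^sup>2)};
          LBm = {A. A > 0 \<and> (\<forall>f\<in>Km. coef_summable B fb Im f \<and>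
                    A * (fnorm (\<lambda>x y. - B x y) f)\<^sup>2 \<le> coef_sum B fb Im f)};
          UBm = {B1. B1 > 0 \<and> (\<forall>f\<in>Km. coef_summable B fb Im f \<and>
                    coef_sum B fb Im f \<le> B1 * (fnorm (\<lambda>x y. - B x y) f)\<^sup>2)};
          ap = 1 / (opnorm B Kp (inv_into Kp Up))\<^sup>2;
          bp = (opnorm B Kp Up)\<^sup>2;
          am = 1 / (opnorm (\<lambda>x y. - B x y) Km (inv_into Km Um))\<^sup>2;
          bm = (opnorm (\<lambda>x y. - B x y) Km Um)\<^sup>2
      in ap \<in> LBp \<and> (\<forall>A\<in>LBp. A \<le> ap) \<and>
         bp \<in> UBp \<and> (\<forall>B1\<in>UBp. bp \<le> B1) \<and>
         am \<in> LBm \<and> (\<forall>A\<in>LBm. A \<le> am) \<and>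
         bm \<in> UBm \<and> (\<forall>B1\<in>UBm. bm \<le> B1))"
proof -
  note K = krein[unfolded krein_space_def]
  have vs: "vector_space sc" using K by (rule conjunct1)
  note K1 = K[THEN conjunct2]
  have aL: "\<And>x y z. B (x + y) z = B x z + B y z" using K1[THEN conjunct1] by blast
  note K2 = K1[THEN conjunct2]
  have sL: "\<And>c x y. B (sc c x) y = c * B x y" using K2[THEN conjunct1] by blast
  note K3 = K2[THEN conjunct2]
  have hm: "\<And>x y. B y x = cnj (B x y)" using K3[THEN conjunct1] by blast
  note K4 = K3[THEN conjunct2]
  have subp: "module.subspace sc Kp" using K4[THEN conjunct1] .
  note K5 = K4[THEN conjunct2]
  have subm: "module.subspace sc Km" using K5[THEN conjunct1] .
  note K6 = K5[THEN conjunct2, THEN conjunct2, THEN conjunct2, THEN conjunct2]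
  have hpp: "hilbert_part B Kp" using K6[THEN conjunct1] .
  have hpm: "hilbert_part (\<lambda>x y. - B x y) Km" using K6[THEN conjunct2] .
  have md: "module sc" using vs by (simp add: module_iff_vector_space)
  have "hsb sc B Kp Ip e"
  proof (intro hsb.intro hs.intro hsb_axioms.intro)
    show "module sc" by (rule md)
    show "B (x + y) z = B x z + B y z" for x y z by (rule aL)
    show "B (sc c x) y = c * B x y" for c x y by (rule sL)
    show "B y x = cnj (B x y)" for x y by (rule hm)
  qed (fact subp hpp onb_p)+
  then interpret P: hsb sc B Kp Ip e .
  have "hsb sc (\<lambda>x y. - B x y) Km Im e"
  proof (intro hsb.intro hs.intro hsb_axioms.intro)
    show "module sc" by (rule md)
    show "- B (x + y) z = - B x z + - B y z" for x y z by (simp add: aL)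
    show "- B (sc c x) y = c * - B x y" for c x y by (simp add: sL)
    show "- B y x = cnj (- B x y)" for x y by (simp add: hm[of x y])
  qed (fact subm hpm onb_m)+
  then interpret N: hsb sc "\<lambda>x y. - B x y" Km Im e .
  have Up': "bij_betw Up Kp Kp" "\<forall>x\<in>Kp. \<forall>y\<in>Kp. Up (x + y) = Up x + Up y"
    "\<forall>c. \<forall>x\<in>Kp. Up (sc c x) = sc c (Up x)" "\<exists>C. \<forall>x\<in>Kp. fnorm B (Up x) \<le> C * fnorm B x"
    using Up unfolding bounded_bij_op_def by blast+
  have Um': "bij_betw Um Km Km" "\<forall>x\<in>Km. \<forall>y\<in>Km. Um (x + y) = Um x + Um y"
    "\<forall>c. \<forall>x\<in>Km. Um (sc c x) = sc c (Um x)" "\<exists>C. \<forall>x\<in>Km. fnorm (\<lambda>x y. - B x y) (Um x) \<le> C * fnorm (\<lambda>x y. - B x y) x"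
    using Um unfolding bounded_bij_op_def by blast+
  have bijp: "bij_betw Up Kp Kp" by (rule Up'(1))
  have bijm: "bij_betw Um Km Km" by (rule Um'(1))
  have blp: "P.bl Up" unfolding P.bl_def P.nrm_def
    using Up'(2-4) bij_betw_apply[OF bijp] by blast
  have blm: "N.bl Um" unfolding N.bl_def N.nrm_def
    using Um'(2-4) bij_betw_apply[OF bijm] by blast
  have neg1: "coef_summable (\<lambda>x y. - B x y) fb I f = coef_summable B fb I f" for I f
    unfolding coef_summable_def by simp
  have neg2: "coef_sum (\<lambda>x y. - B x y) fb I f = coef_sum B fb I f" for I f
    unfolding coef_sum_def by simp
  note RP = P.frame_main[OF blp bijp Kp_nontriv fb_p]
  note RM = N.frame_main[OF blm bijm Km_nontriv fb_m, unfolded neg1 neg2]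
  note P1 = RP[THEN conjunct1] and P2 = RP[THEN conjunct2, THEN conjunct1]
    and P3 = RP[THEN conjunct2, THEN conjunct2, THEN conjunct1]
    and P4 = RP[THEN conjunct2, THEN conjunct2, THEN conjunct2, THEN conjunct1]
    and P5 = RP[THEN conjunct2, THEN conjunct2, THEN conjunct2, THEN conjunct2]
  note M1 = RM[THEN conjunct1] and M2 = RM[THEN conjunct2, THEN conjunct1]
    and M3 = RM[THEN conjunct2, THEN conjunct2, THEN conjunct1]
    and M4 = RM[THEN conjunct2, THEN conjunct2, THEN conjunct2, THEN conjunct1]
    and M5 = RM[THEN conjunct2, THEN conjunct2, THEN conjunct2, THEN conjunct2]
  show ?thesis
    unfolding Let_def
  proof (intro conjI)
    show "\<exists>A B1 A' B1'. A > 0 \<and> B1 > 0 \<and> A' > 0 \<and> B1' > 0 \<and>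
        (\<forall>f\<in>Kp. coef_summable B fb Ip f \<and>
            A * (fnorm B f)\<^sup>2 \<le> coef_sum B fb Ip f \<and>
            coef_sum B fb Ip f \<le> B1 * (fnorm B f)\<^sup>2) \<and>
        (\<forall>f\<in>Km. coef_summable B fb Im f \<and>
            A' * (fnorm (\<lambda>x y. - B x y) f)\<^sup>2 \<le> coef_sum B fb Im f \<and>
            coef_sum B fb Im f \<le> B1' * (fnorm (\<lambda>x y. - B x y) f)\<^sup>2)"
      apply (rule exI[of _ "1 / (opnorm B Kp (inv_into Kp Up))^2"])
      apply (rule exI[of _ "(opnorm B Kp Up)^2"])
      apply (rule exI[of _ "1 / (opnorm (\<lambda>x y. - B x y) Km (inv_into Km Um))^2"])
      apply (rule exI[of _ "(opnorm (\<lambda>x y. - B x y) Km Um)^2"])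
      by (intro conjI P2 P3 M2 M3 P1 M1)
  qed (use P1 P2 P3 P4 P5 M1 M2 M3 M4 M5 in \<open>simp_all\<close>)
qed

end
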